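(* Let $T$ be a fractal CQCA on the spin-$1/2$ chain and let $P=\bigotimes\sigma_i$ be a finite tensor product of Pauli matrices different from the identity. Then for every $k\in\mathbb{N}$ there exists $m\in\mathbb{N}$ such that $T^m(P)$ is (a multiple of) a tensor product containing at least $k$ non-identity Pauli matrices.
   Context: A CQCA is an automorphism $T$ of $\bigotimes_{x\in\mathbb{Z}}M_2$ commuting with translations and mapping Pauli products to multiples of Pauli products; labelling Pauli products by $\xi\in\mathcal{P}^2$ ($\mathcal{P}$ = Laurent polynomials in $u$ over $\mathbb{Z}_2$) one has $T(W(\xi))\propto W(\mathbf{a}\xi)$ for a $2\times 2$ matrix $\mathbf{a}$ over $\mathcal{P}$. $T$ is centered if $\mathbf{a}$ has palindromic entries ($p(u^{-1})=p(u)$) and determinant $1$. A centered CQCA is fractal if $\mathbf{a}$ is neither periodic ($\mathbf{a}^p=\mathbb{1}$ for some $p\ge1$) nor has gliders (non-zero $\xi$ with $\mathbf{a}\xi=u^k\xi$ for some integer $k\neq0$). *)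

theory Defs
  imports Main
begin

text \<open>Laurent polynomials in u over Z_2, represented by their coefficient
  function int => bool (True = coefficient 1); a Laurent polynomial must have
  finite support.\<close>

type_synonym lpoly = "int \<Rightarrow> bool"

definition is_lpoly :: "lpoly \<Rightarrow> bool" where
  "is_lpoly p \<longleftrightarrow> finite {n. p n}"

definition lzero :: lpoly where "lzero = (\<lambda>n. False)"

definition lmon :: "int \<Rightarrow> lpoly" where "lmon k = (\<lambda>n. n = k)"

definition lone :: lpoly where "lone = lmon 0"

definition ladd :: "lpoly \<Rightarrow> lpoly \<Rightarrow> lpoly" where
  "ladd p q = (\<lambda>n. p n \<noteq> q n)"

definition lmul :: "lpoly \<Rightarrow> lpoly \<Rightarrow> lpoly" where
  "lmul p q = (\<lambda>n. odd (card {i. p i \<and> q (n - i)}))"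

definition palindromic :: "lpoly \<Rightarrow> bool" where
  "palindromic p \<longleftrightarrow> (\<forall>n. p (- n) = p n)"

type_synonym mat2 = "lpoly \<times> lpoly \<times> lpoly \<times> lpoly"
type_synonym vec2 = "lpoly \<times> lpoly"

fun mat_vec :: "mat2 \<Rightarrow> vec2 \<Rightarrow> vec2" where
  "mat_vec (a, b, c, d) (x, y) =
     (ladd (lmul a x) (lmul b y), ladd (lmul c x) (lmul d y))"

fun mat_mul :: "mat2 \<Rightarrow> mat2 \<Rightarrow> mat2" where
  "mat_mul (a, b, c, d) (a', b', c', d') =
     (ladd (lmul a a') (lmul b c'), ladd (lmul a b') (lmul b d'),
      ladd (lmul c a') (lmul d c'), ladd (lmul c b') (lmul d d'))"

definition mat_id :: mat2 where "mat_id = (lone, lzero, lzero, lone)"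

primrec mat_pow :: "mat2 \<Rightarrow> nat \<Rightarrow> mat2" where
  "mat_pow A 0 = mat_id"
| "mat_pow A (Suc n) = mat_mul A (mat_pow A n)"

fun mat_det :: "mat2 \<Rightarrow> lpoly" where
  "mat_det (a, b, c, d) = ladd (lmul a d) (lmul b c)"

fun is_lmat :: "mat2 \<Rightarrow> bool" where
  "is_lmat (a, b, c, d) \<longleftrightarrow> is_lpoly a \<and> is_lpoly b \<and> is_lpoly c \<and> is_lpoly d"

definition is_lvec :: "vec2 \<Rightarrow> bool" where
  "is_lvec v \<longleftrightarrow> is_lpoly (fst v) \<and> is_lpoly (snd v)"

definition vzero :: vec2 where "vzero = (lzero, lzero)"

fun centered :: "mat2 \<Rightarrow> bool" where
  "centered (a, b, c, d) \<longleftrightarrow> is_lmat (a, b, c, d) \<and>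
     palindromic a \<and> palindromic b \<and> palindromic c \<and> palindromic d \<and>
     mat_det (a, b, c, d) = lone"

definition periodic :: "mat2 \<Rightarrow> bool" where
  "periodic A \<longleftrightarrow> (\<exists>p::nat. p \<ge> 1 \<and> mat_pow A p = mat_id)"

definition has_glider :: "mat2 \<Rightarrow> bool" where
  "has_glider A \<longleftrightarrow> (\<exists>\<xi> k. is_lvec \<xi> \<and> \<xi> \<noteq> vzero \<and> k \<noteq> (0::int) \<and>
       mat_vec A \<xi> = (lmul (lmon k) (fst \<xi>), lmul (lmon k) (snd \<xi>)))"

definition fractal :: "mat2 \<Rightarrow> bool" where
  "fractal A \<longleftrightarrow> centered A \<and> \<not> periodic A \<and> \<not> has_glider A"

text \<open>Number of non-identity Pauli factors of W(xi): sites x where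
  the factor X^(xi_1 coeff x) Z^(xi_2 coeff x) is not the identity.\<close>
definition pauli_weight :: "vec2 \<Rightarrow> nat" where
  "pauli_weight \<xi> = card {x. fst \<xi> x \<or> snd \<xi> x}"

end

theory Submission
  imports Defs "HOL-Library.Z2" "HOL-Computational_Algebra.Formal_Laurent_Series"
begin

unbundle fps_syntax
notation fls_nth (infixl "$$" 75)

type_synonym F = "bit fls"

definition phi :: "lpoly \<Rightarrow> F" where
  "phi p = Abs_fls (\<lambda>n. of_bool (p n))"

lemma phi_nth: assumes "is_lpoly p" shows "phi p $$ n = of_bool (p n)"
proof -
  have fin: "finite {n. p n}" using assms by (simp add: is_lpoly_def)
  have "finite {n::nat. p (- int n)}"
  proof -
    have "{n::nat. p (- int n)} \<subseteq> (\<lambda>k. nat (- k)) ` {n. p n}"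
      by (auto intro!: image_eqI[where x="- int _"])
    thus ?thesis using fin finite_surj by blast
  qed
  hence "\<forall>\<^sub>\<infinity> n::nat. (of_bool (p (- int n)) :: bit) = 0"
    by (simp add: eventually_cofinite)
  thus ?thesis unfolding phi_def by simp
qed

lemma phi_inj: assumes "is_lpoly p" "is_lpoly q" "phi p = phi q" shows "p = q"
proof
  fix n
  have "phi p $$ n = phi q $$ n" using assms(3) by simp
  thus "p n = q n" using assms phi_nth by (metis of_bool_eq_iff)
qed

lemma lpoly_ladd: "is_lpoly p \<Longrightarrow> is_lpoly q \<Longrightarrow> is_lpoly (ladd p q)"
  unfolding is_lpoly_def ladd_def
  by (rule finite_subset[of _ "{n. p n} \<union> {n. q n}"]) auto

lemma bit_add_of_bool: "(of_bool a + of_bool b :: bit) = of_bool (a \<noteq> b)"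
  by (cases a; cases b) simp_all

lemma phi_ladd: "is_lpoly p \<Longrightarrow> is_lpoly q \<Longrightarrow> phi (ladd p q) = phi p + phi q"
  by (rule fls_eqI) (simp add: phi_nth lpoly_ladd bit_add_of_bool, simp add: ladd_def)

lemma lmul_ex: "lmul p q n \<Longrightarrow> \<exists>i. p i \<and> q (n - i)"
  unfolding lmul_def by (metis (mono_tags, lifting) card.empty empty_Collect_eq even_zero)

lemma lpoly_lmul: assumes "is_lpoly p" "is_lpoly q" shows "is_lpoly (lmul p q)"
proof -
  have "{n. lmul p q n} \<subseteq> (\<lambda>(i,j). i + j) ` ({n. p n} \<times> {n. q n})"
  proof
    fix n assume "n \<in> {n. lmul p q n}"
    then obtain i where "p i" "q (n - i)" using lmul_ex by blast
    thus "n \<in> (\<lambda>(i,j). i + j) ` ({n. p n} \<times> {n. q n})"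
      by (auto intro!: image_eqI[where x="(i, n - i)"])
  qed
  thus ?thesis using assms unfolding is_lpoly_def
    by (meson finite_SigmaI finite_imageI finite_subset)
qed

lemma of_nat_bit: "(of_nat m :: bit) = of_bool (odd m)"
  by (induct m) (simp_all add: bit_add_of_bool)

lemma phi_lmul: assumes "is_lpoly p" "is_lpoly q" shows "phi (lmul p q) = phi p * phi q"
proof (rule fls_eqI)
  fix n
  define f where "f = phi p" define g where "g = phi q"
  define df where "df = fls_subdegree f" define dg where "dg = fls_subdegree g"
  have fn: "\<And>i. f $$ i = of_bool (p i)" using assms by (simp add: f_def phi_nth)
  have gn: "\<And>i. g $$ i = of_bool (q i)" using assms by (simp add: g_def phi_nth)
  have "(f * g) $$ n = (\<Sum>i=df..n - dg. f $$ i * g $$ (n - i))"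
    unfolding df_def dg_def by (rule fls_times_nth(2))
  also have "\<dots> = (\<Sum>i\<in>{i. p i \<and> q (n - i)}. 1)"
  proof (rule sum.mono_neutral_cong_right)
    show "finite {df..n - dg}" by simp
    show "{i. p i \<and> q (n - i)} \<subseteq> {df..n - dg}"
    proof
      fix i assume "i \<in> {i. p i \<and> q (n - i)}"
      hence "f $$ i \<noteq> 0" "g $$ (n - i) \<noteq> 0" by (auto simp: fn gn)
      hence "df \<le> i" "dg \<le> n - i" unfolding df_def dg_def by (auto intro: fls_subdegree_leI)
      thus "i \<in> {df..n - dg}" by simp
    qed
    show "\<forall>i\<in>{df..n - dg} - {i. p i \<and> q (n - i)}. f $$ i * g $$ (n - i) = 0"
      by (auto simp: fn gn)
    show "\<And>x. x \<in> {i. p i \<and> q (n - i)} \<Longrightarrow> f $$ x * g $$ (n - x) = 1"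
      by (auto simp: fn gn)
  qed
  also have "\<dots> = of_bool (lmul p q n)"
    by (simp add: lmul_def of_nat_bit)
  finally show "phi (lmul p q) $$ n = (phi p * phi q) $$ n"
    using assms lpoly_lmul by (simp add: phi_nth f_def g_def)
qed


lemma lpoly_lzero[simp]: "is_lpoly lzero" by (simp add: is_lpoly_def lzero_def)
lemma lpoly_lmon[simp]: "is_lpoly (lmon k)" by (simp add: is_lpoly_def lmon_def)
lemma lpoly_lone[simp]: "is_lpoly lone" by (simp add: lone_def)

lemma phi_lzero[simp]: "phi lzero = 0"
  by (rule fls_eqI) (simp add: phi_nth lzero_def[symmetric], simp add: lzero_def)

lemma phi_lmon: "phi (lmon k) = fls_X_intpow k"
  by (rule fls_eqI) (simp add: phi_nth, simp add: lmon_def)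

lemma phi_lone[simp]: "phi lone = 1"
  by (simp add: lone_def phi_lmon)

lemma lmul_lmon: "lmul (lmon s) p = (\<lambda>n. p (n - s))"
proof
  fix n
  have "{i. lmon s i \<and> p (n - i)} = (if p (n - s) then {s} else {})"
    by (auto simp: lmon_def)
  thus "lmul (lmon s) p n = p (n - s)" by (simp add: lmul_def)
qed

lemma F_add_self[simp]: "(x::F) + x = 0"
proof (rule fls_eqI)
  fix n show "(x + x) $$ n = 0 $$ n" by (cases "x $$ n") simp_all
qed

lemma F_uminus[simp]: "- (x::F) = x"
  using F_add_self[of x] by (metis add_right_imp_eq neg_eq_iff_add_eq_0)

lemma F_minus: "(x::F) - y = x + y"
  by (metis F_uminus diff_conv_add_uminus)

type_synonym vF = "F \<times> F"
type_synonym mF = "F \<times> F \<times> F \<times> F"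

fun mvF :: "mF \<Rightarrow> vF \<Rightarrow> vF" where
  "mvF (a, b, c, d) (x, y) = (a * x + b * y, c * x + d * y)"

fun mmulF :: "mF \<Rightarrow> mF \<Rightarrow> mF" where
  "mmulF (a, b, c, d) (a', b', c', d') =
     (a * a' + b * c', a * b' + b * d', c * a' + d * c', c * b' + d * d')"

fun PhiV :: "vec2 \<Rightarrow> vF" where "PhiV (x, y) = (phi x, phi y)"
fun PhiM :: "mat2 \<Rightarrow> mF" where "PhiM (a, b, c, d) = (phi a, phi b, phi c, phi d)"

lemma mvF_mmulF: "mvF (mmulF A B) v = mvF A (mvF B v)"
  by (cases A; cases B; cases v) (simp add: algebra_simps)

lemma lvec_mat_vec: "is_lmat B \<Longrightarrow> is_lvec v \<Longrightarrow> is_lvec (mat_vec B v)"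
  by (cases B; cases v) (simp add: is_lvec_def lpoly_ladd lpoly_lmul)

lemma PhiV_mat_vec: "is_lmat B \<Longrightarrow> is_lvec v \<Longrightarrow> PhiV (mat_vec B v) = mvF (PhiM B) (PhiV v)"
  by (cases B; cases v) (simp add: is_lvec_def lpoly_ladd lpoly_lmul phi_ladd phi_lmul)

lemma lmat_mat_mul: "is_lmat B \<Longrightarrow> is_lmat C \<Longrightarrow> is_lmat (mat_mul B C)"
  by (cases B; cases C) (simp add: lpoly_ladd lpoly_lmul)

lemma PhiM_mat_mul: "is_lmat B \<Longrightarrow> is_lmat C \<Longrightarrow> PhiM (mat_mul B C) = mmulF (PhiM B) (PhiM C)"
  by (cases B; cases C) (simp add: lpoly_ladd lpoly_lmul phi_ladd phi_lmul)

lemma lmat_id: "is_lmat mat_id" by (simp add: mat_id_def)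

lemma lmat_pow: "is_lmat A \<Longrightarrow> is_lmat (mat_pow A m)"
  by (induct m) (simp_all add: lmat_id lmat_mat_mul)

lemma mvF_id: "mvF (1, 0, 0, 1) v = v" by (cases v) simp

lemma PhiV_orbit:
  assumes "is_lmat A" "is_lvec v"
  shows "PhiV (mat_vec (mat_pow A m) v) = (mvF (PhiM A) ^^ m) (PhiV v)"
proof (induct m)
  case 0 thus ?case using assms by (simp add: PhiV_mat_vec lmat_id mat_id_def mvF_id)
next
  case (Suc m)
  have "PhiV (mat_vec (mat_pow A (Suc m)) v) = mvF (PhiM A) (mvF (PhiM (mat_pow A m)) (PhiV v))"
    using assms by (simp add: PhiV_mat_vec lmat_mat_mul lmat_pow PhiM_mat_mul mvF_mmulF)
  also have "mvF (PhiM (mat_pow A m)) (PhiV v) = (mvF (PhiM A) ^^ m) (PhiV v)"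
    using Suc assms by (simp add: PhiV_mat_vec lmat_pow)
  finally show ?case by simp
qed

lemma lvec_orbit: "is_lmat A \<Longrightarrow> is_lvec v \<Longrightarrow> is_lvec (mat_vec (mat_pow A m) v)"
  by (simp add: lvec_mat_vec lmat_pow)

lemma PhiV_inj: "is_lvec v \<Longrightarrow> is_lvec w \<Longrightarrow> PhiV v = PhiV w \<Longrightarrow> v = w"
  by (cases v; cases w) (auto simp: is_lvec_def intro: phi_inj)

lemma PhiV_zero_iff: "is_lvec v \<Longrightarrow> PhiV v = (0, 0) \<longleftrightarrow> v = vzero"
  by (metis PhiV.simps PhiV_inj fst_conv is_lpoly_def is_lvec_def lzero_def phi_lzero
      snd_conv vzero_def finite.emptyI empty_Collect_eq)


lemma F_sq_add: "((x::F) + y)^2 = x^2 + y^2"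
proof -
  have "(x + y)^2 = x^2 + y^2 + (x*y + x*y)" by algebra
  thus ?thesis by (simp only: F_add_self add_0_right)
qed

lemma F_eq_iff_add: "(x::F) + y = 0 \<longleftrightarrow> x = y"
  by (metis F_add_self add_right_cancel)

lemma root_unity_F:
  fixes \<mu> :: F
  assumes sd: "fls_subdegree \<mu> = 0" and nz: "\<mu> \<noteq> 0"
  shows "0 < P \<Longrightarrow> \<mu>^P = 1 \<Longrightarrow> \<mu> = 1"
proof (induct P rule: less_induct)
  case (less P)
  show ?case
  proof (cases "even P")
    case True
    then obtain Q where Q: "P = 2 * Q" by blast
    with less.prems have Q0: "0 < Q" "Q < P" by auto
    have "(\<mu>^Q + 1)^2 = (\<mu>^Q)^2 + 1" by (simp add: F_sq_add)
    also have "(\<mu>^Q)^2 = \<mu>^P" by (simp add: Q power_mult[symmetric] mult.commute)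
    also have "\<mu>^P + 1 = 0" using less.prems by simp
    finally have "\<mu>^Q + 1 = 0" by simp
    hence "\<mu>^Q = 1" by (simp add: F_eq_iff_add)
    thus ?thesis using less.hyps Q0 by blast
  next
    case False
    define S where "S = (\<Sum>i<P. (1::F)^(P - Suc i) * \<mu>^i)"
    have "\<mu>^P - 1^P = (\<mu> - 1) * S" unfolding S_def by (rule power_diff_sumr2)
    hence eq: "(\<mu> - 1) * S = 0" using less.prems by simp
    have m0: "\<mu> $$ 0 = 1" using nth_fls_subdegree_nonzero[OF nz] sd by simp
    have "\<And>i. (\<mu>^i) $$ 0 = 1"
      using fls_pow_base[of \<mu>] sd m0 by simp
    hence "S $$ 0 = of_nat P" unfolding S_def by (simp add: fls_nth_sum)
    also have "\<dots> = 1" using False by (simp add: of_nat_bit)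
    finally have "S \<noteq> 0" by auto
    with eq have "\<mu> - 1 = 0" by simp
    thus ?thesis by simp
  qed
qed


definition smulF :: "F \<Rightarrow> vF \<Rightarrow> vF" where "smulF c v = (c * fst v, c * snd v)"
definition addF :: "vF \<Rightarrow> vF \<Rightarrow> vF" where "addF u v = (fst u + fst v, snd u + snd v)"
definition Df :: "vF \<Rightarrow> vF \<Rightarrow> F" where "Df x y = fst x * snd y + snd x * fst y"

lemma mvF_smul: "mvF A (smulF c x) = smulF c (mvF A x)"
  by (cases A; cases x) (simp add: smulF_def algebra_simps)

lemma mvF_add: "mvF A (addF x y) = addF (mvF A x) (mvF A y)"
  by (cases A; cases x; cases y) (simp add: addF_def algebra_simps)

lemma it_smul: "(mvF A ^^ n) (smulF c x) = smulF c ((mvF A ^^ n) x)"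
  by (induct n) (simp_all add: mvF_smul)

lemma it_add: "(mvF A ^^ n) (addF x y) = addF ((mvF A ^^ n) x) ((mvF A ^^ n) y)"
  by (induct n) (simp_all add: mvF_add)

lemma it_comm: "(mvF A ^^ n) (mvF A x) = mvF A ((mvF A ^^ n) x)"
  by (simp add: funpow_swap1)

lemma CH_F:
  assumes hd: "\<alpha>*\<delta> + \<beta>*\<gamma> = (1::F)"
  shows "mvF (\<alpha>,\<beta>,\<gamma>,\<delta>) (mvF (\<alpha>,\<beta>,\<gamma>,\<delta>) x) = addF (smulF (\<alpha>+\<delta>) (mvF (\<alpha>,\<beta>,\<gamma>,\<delta>) x)) x"
proof (cases x)
  case (Pair x1 x2)
  have e1: "(\<alpha>+\<delta>)*(\<alpha>*x1+\<beta>*x2) + (\<alpha>*\<delta>+\<beta>*\<gamma>)*x1 =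
      \<alpha>*(\<alpha>*x1+\<beta>*x2) + \<beta>*(\<gamma>*x1+\<delta>*x2) + (\<alpha>*\<delta>*x1 + \<alpha>*\<delta>*x1)" by algebra
  have e2: "(\<alpha>+\<delta>)*(\<gamma>*x1+\<delta>*x2) + (\<alpha>*\<delta>+\<beta>*\<gamma>)*x2 =
      \<gamma>*(\<alpha>*x1+\<beta>*x2) + \<delta>*(\<gamma>*x1+\<delta>*x2) + (\<alpha>*\<delta>*x2 + \<alpha>*\<delta>*x2)" by algebra
  show ?thesis using e1 e2 hd Pair by (simp add: addF_def smulF_def)
qed

lemma D_mvF:
  assumes hd: "\<alpha>*\<delta> + \<beta>*\<gamma> = (1::F)"
  shows "Df (mvF (\<alpha>,\<beta>,\<gamma>,\<delta>) x) (mvF (\<alpha>,\<beta>,\<gamma>,\<delta>) y) = Df x y"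
proof (cases x; cases y)
  fix x1 x2 y1 y2 assume xy: "x = (x1, x2)" "y = (y1, y2)"
  have "(\<alpha>*x1+\<beta>*x2)*(\<gamma>*y1+\<delta>*y2) + (\<gamma>*x1+\<delta>*x2)*(\<alpha>*y1+\<beta>*y2) =
     (\<alpha>*\<delta>+\<beta>*\<gamma>)*(x1*y2+x2*y1) + (\<alpha>*\<gamma>*x1*y1 + \<alpha>*\<gamma>*x1*y1) + (\<beta>*\<delta>*x2*y2 + \<beta>*\<delta>*x2*y2)"
    by algebra
  thus ?thesis using hd xy by (simp add: Df_def)
qed

lemma D_it:
  assumes hd: "\<alpha>*\<delta> + \<beta>*\<gamma> = (1::F)"
  shows "Df ((mvF (\<alpha>,\<beta>,\<gamma>,\<delta>) ^^ n) x) ((mvF (\<alpha>,\<beta>,\<gamma>,\<delta>) ^^ n) y) = Df x y"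
  by (induct n) (simp_all add: D_mvF[OF hd])

lemma inj_mvF:
  assumes hd: "\<alpha>*\<delta> + \<beta>*\<gamma> = (1::F)" and z: "mvF (\<alpha>,\<beta>,\<gamma>,\<delta>) x = (0,0)"
  shows "x = (0,0)"
proof (cases x)
  case (Pair x1 x2)
  have a: "\<alpha>*x1+\<beta>*x2 = 0" "\<gamma>*x1+\<delta>*x2 = 0" using z Pair by auto
  have e1: "(\<alpha>*\<delta>+\<beta>*\<gamma>)*x1 + (\<beta>*\<delta>*x2 + \<beta>*\<delta>*x2) = \<delta>*(\<alpha>*x1+\<beta>*x2) + \<beta>*(\<gamma>*x1+\<delta>*x2)"
    by algebra
  have e2: "(\<alpha>*\<delta>+\<beta>*\<gamma>)*x2 + (\<alpha>*\<gamma>*x1 + \<alpha>*\<gamma>*x1) = \<gamma>*(\<alpha>*x1+\<beta>*x2) + \<alpha>*(\<gamma>*x1+\<delta>*x2)"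
    by algebra
  have "x1 = 0" using e1 unfolding a hd by simp
  moreover have "x2 = 0" using e2 unfolding a hd by simp
  ultimately show ?thesis using Pair by simp
qed

lemma inj_it:
  assumes hd: "\<alpha>*\<delta> + \<beta>*\<gamma> = (1::F)" and z: "(mvF (\<alpha>,\<beta>,\<gamma>,\<delta>) ^^ n) x = (0,0)"
  shows "x = (0,0)"
  using z
proof (induct n arbitrary: x)
  case 0 thus ?case by simp
next
  case (Suc n)
  have "(mvF (\<alpha>,\<beta>,\<gamma>,\<delta>) ^^ n) (mvF (\<alpha>,\<beta>,\<gamma>,\<delta>) x) = (0,0)"
    using Suc.prems by (simp only: funpow_Suc_right o_apply)
  hence "mvF (\<alpha>,\<beta>,\<gamma>,\<delta>) x = (0,0)" by (rule Suc.hyps)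
  thus ?case by (rule inj_mvF[OF hd])
qed

lemma smulF_cancel:
  assumes "w \<noteq> (0,0)" "smulF a w = smulF b w" shows "a = b"
  using assms by (cases w) (auto simp: smulF_def)

lemma X_intpow_eq_1: "fls_X_intpow s = (1::F) \<Longrightarrow> s = 0"
  using fls_subdegree_fls_X_intpow[of s] by (metis fls_one_subdegree)

lemma noreturn_F:
  fixes \<alpha> \<beta> \<gamma> \<delta> :: F and w :: vF and P :: nat and s :: int
  assumes hd: "\<alpha>*\<delta> + \<beta>*\<gamma> = 1" and wnz: "w \<noteq> (0,0)" and P: "0 < P"
    and ret: "(mvF (\<alpha>,\<beta>,\<gamma>,\<delta>) ^^ P) w = smulF (fls_X_intpow s) w"
  shows "(\<forall>x. (mvF (\<alpha>,\<beta>,\<gamma>,\<delta>) ^^ P) x = x)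
    \<or> (\<exists>k. k \<noteq> 0 \<and> mvF (\<alpha>,\<beta>,\<gamma>,\<delta>) w = smulF (fls_X_intpow k) w)
    \<or> (\<forall>x. mvF (\<alpha>,\<beta>,\<gamma>,\<delta>) (mvF (\<alpha>,\<beta>,\<gamma>,\<delta>) x) = x)"
proof -
  define A where "A = (\<alpha>,\<beta>,\<gamma>,\<delta>)"
  define v where "v = mvF A w"
  define \<Delta> where "\<Delta> = Df w v"
  define X where "X = (fls_X_intpow s :: F)"
  have retA: "(mvF A ^^ P) w = smulF X w" using ret by (simp add: A_def X_def)
  have retv: "(mvF A ^^ P) v = smulF X v"
    unfolding v_def by (simp add: it_comm retA mvF_smul)
  show ?thesis
  proof (cases "\<Delta> = 0")
    case False
    have allx: "(mvF A ^^ P) x = smulF X x" for x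
    proof -
      obtain x1 x2 where x: "x = (x1, x2)" by (cases x)
      obtain w1 w2 where w: "w = (w1, w2)" by (cases w)
      obtain v1 v2 where v: "v = (v1, v2)" by (cases v)
      have dec: "smulF \<Delta> x = addF (smulF (Df x v) w) (smulF (Df w x) v)"
      proof -
        have "(w1*v2+w2*v1)*x1 + (x2*v1*w1 + x2*v1*w1) = (x1*v2+x2*v1)*w1 + (w1*x2+w2*x1)*v1"
          by algebra
        moreover have "(w1*v2+w2*v1)*x2 + (x1*v2*w2 + x1*v2*w2) = (x1*v2+x2*v1)*w2 + (w1*x2+w2*x1)*v2"
          by algebra
        ultimately show ?thesis by (simp add: x w v \<Delta>_def Df_def smulF_def addF_def)
      qed
      have "smulF \<Delta> ((mvF A ^^ P) x) = (mvF A ^^ P) (smulF \<Delta> x)" by (simp add: it_smul)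
      also have "\<dots> = addF (smulF (Df x v) (smulF X w)) (smulF (Df w x) (smulF X v))"
        by (simp add: dec it_add it_smul retA retv)
      also have "\<dots> = smulF \<Delta> (smulF X x)"
        using dec by (simp add: smulF_def addF_def algebra_simps)
      finally have eq: "smulF \<Delta> ((mvF A ^^ P) x) = smulF \<Delta> (smulF X x)" .
      show ?thesis using eq False by (cases "(mvF A ^^ P) x") (simp add: smulF_def)
    qed
    have "Df ((mvF A ^^ P) (1,0)) ((mvF A ^^ P) (0,1)) = Df (1,0) (0,1)"
      unfolding A_def by (rule D_it[OF hd])
    hence "X * X = 1" using allx[of "(1,0)"] allx[of "(0,1)"] by (simp add: Df_def smulF_def)
    hence "fls_X_intpow (s + s) = (1::F)" by (simp add: X_def fls_X_intpow_times_fls_X_intpow)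
    hence "s = 0" using X_intpow_eq_1 by fastforce
    hence "X = 1" by (simp add: X_def)
    hence "\<forall>x. (mvF A ^^ P) x = x" using allx by (simp add: smulF_def)
    thus ?thesis by (simp add: A_def)
  next
    case True
    obtain w1 w2 where w: "w = (w1, w2)" by (cases w)
    obtain v1 v2 where v: "v = (v1, v2)" by (cases v)
    have D0: "w1 * v2 = w2 * v1" using True by (simp add: \<Delta>_def Df_def w v F_eq_iff_add)
    obtain lm where lm: "v = smulF lm w"
    proof (cases "w1 = 0")
      case True
      hence "w2 \<noteq> 0" using wnz w by simp
      hence "v1 = 0" using D0 True by simp
      show ?thesis using that[of "v2 / w2"] \<open>w2 \<noteq> 0\<close> \<open>v1 = 0\<close> True by (simp add: v w smulF_def)
    next
      case False
      have "v2 = v1 / w1 * w2" using D0 False by (simp add: field_simps)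
      thus ?thesis using that[of "v1 / w1"] False by (simp add: v w smulF_def)
    qed
    have itw: "(mvF A ^^ n) w = smulF (lm^n) w" for n
    proof (induct n)
      case 0 thus ?case by (cases w) (simp add: smulF_def)
    next
      case (Suc n)
      have "(mvF A ^^ Suc n) w = smulF (lm^n) (mvF A w)" by (simp add: Suc mvF_smul)
      also have "\<dots> = smulF (lm^Suc n) w" using lm by (cases w) (simp add: v_def smulF_def)
      finally show ?case .
    qed
    have lP: "lm^P = X" using itw[of P] retA wnz smulF_cancel by metis
    have "mvF A v = addF (smulF (\<alpha>+\<delta>) v) w" unfolding A_def v_def by (rule CH_F[OF hd])
    hence "smulF (lm^2) w = smulF ((\<alpha>+\<delta>)*lm + 1) w"
      using lm mvF_smul[of A lm w] v_def by (cases w) (simp add: smulF_def addF_def power2_eq_square algebra_simps)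
    hence l2: "lm^2 = (\<alpha>+\<delta>)*lm + 1" using wnz smulF_cancel by blast
    have lnz: "lm \<noteq> 0" using lP P using fls_X_intpow_nonzero[of s] by (auto simp: X_def zero_power)
    define \<mu> where "\<mu> = fls_base_factor lm"
    define k where "k = fls_subdegree lm"
    have dec: "lm = \<mu> * fls_X_intpow k" unfolding \<mu>_def k_def by (rule fls_base_factor_X_power_decompose(1))
    have mnz: "\<mu> \<noteq> 0" and msd: "fls_subdegree \<mu> = 0" using lnz fls_base_factor_nonzero[of lm] fls_base_factor_subdegree[of lm] unfolding \<mu>_def by blast+
    have "\<mu>^P * fls_X_intpow (int P * k) = fls_X_intpow s"
      using lP dec by (simp add: X_def power_mult_distrib fls_X_intpow_power)
    hence "\<mu>^P = fls_X_intpow s * fls_X_intpow (- (int P * k))"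
      by (metis (no_types, lifting) add.right_inverse fls_X_intpow_times_fls_X_intpow mult.assoc mult.right_neutral fls_shift_0 minus_zero neg_0_equal_iff_equal)
    hence mP: "\<mu>^P = fls_X_intpow (s - int P * k)" by (simp add: fls_X_intpow_times_conv_shift algebra_simps)
    have "fls_subdegree (\<mu>^P) = 0" using msd by (simp add: fls_subdegree_pow)
    hence "s - int P * k = 0" using mP by simp
    hence "\<mu>^P = 1" using mP by simp
    hence "\<mu> = 1" using root_unity_F[OF msd mnz P] by simp
    hence lk: "lm = fls_X_intpow k" using dec by simp
    show ?thesis
    proof (cases "k = 0")
      case False
      have "mvF A w = smulF (fls_X_intpow k) w" using lm lk by (simp add: v_def)
      thus ?thesis using False by (auto simp: A_def)
    next
      case True
      hence "lm = 1" using lk by simp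
      hence "\<alpha> + \<delta> = 0" using l2 by simp
      hence "\<forall>x. mvF A (mvF A x) = x"
        using CH_F[OF hd] by (simp add: A_def smulF_def addF_def)
      thus ?thesis by (simp add: A_def)
    qed
  qed
qed


definition suppv :: "vec2 \<Rightarrow> int set" where "suppv v = {n. fst v n \<or> snd v n}"
definition vshift :: "int \<Rightarrow> vec2 \<Rightarrow> vec2" where
  "vshift s v = (\<lambda>n. fst v (n - s), \<lambda>n. snd v (n - s))"
definition vaddL :: "vec2 \<Rightarrow> vec2 \<Rightarrow> vec2" where
  "vaddL v w = (ladd (fst v) (fst w), ladd (snd v) (snd w))"

lemma weight_suppv: "pauli_weight v = card (suppv v)"
  by (simp add: pauli_weight_def suppv_def)

lemma finite_suppv: "is_lvec v \<Longrightarrow> finite (suppv v)"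
proof -
  have "suppv v = {n. fst v n} \<union> {n. snd v n}" by (auto simp: suppv_def)
  thus "is_lvec v \<Longrightarrow> finite (suppv v)" by (simp add: is_lvec_def is_lpoly_def)
qed

lemma suppv_empty_iff: "suppv v = {} \<longleftrightarrow> v = vzero"
proof -
  obtain x y where v: "v = (x, y)" by (cases v)
  have "suppv v = {} \<longleftrightarrow> (\<forall>n. \<not> x n) \<and> (\<forall>n. \<not> y n)" by (auto simp: suppv_def v)
  also have "\<dots> \<longleftrightarrow> v = vzero" by (auto simp: v vzero_def lzero_def fun_eq_iff)
  finally show ?thesis .
qed

lemma vshift_vshift: "vshift a (vshift b v) = vshift (a + b) v"
  by (simp add: vshift_def algebra_simps)

lemma vshift_0: "vshift 0 v = v" by (simp add: vshift_def)

lemma lvec_vshift: "is_lvec v \<Longrightarrow> is_lvec (vshift s v)"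
  by (cases v) (simp add: is_lvec_def vshift_def lmul_lmon[symmetric] lpoly_lmul)

lemma PhiV_vshift: "is_lvec v \<Longrightarrow> PhiV (vshift s v) = smulF (fls_X_intpow s) (PhiV v)"
  by (cases v) (simp add: is_lvec_def vshift_def lmul_lmon[symmetric] phi_lmul phi_lmon smulF_def)

lemma suppv_vshift: "suppv (vshift s v) = (\<lambda>n. n + s) ` suppv v"
proof (rule set_eqI)
  fix x
  have "x \<in> (\<lambda>n. n + s) ` suppv v \<longleftrightarrow> x - s \<in> suppv v"
  proof
    assume "x - s \<in> suppv v" thus "x \<in> (\<lambda>n. n + s) ` suppv v" by (rule rev_image_eqI) simp
  qed auto
  thus "x \<in> suppv (vshift s v) \<longleftrightarrow> x \<in> (\<lambda>n. n + s) ` suppv v"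
    by (simp add: suppv_def vshift_def)
qed

lemma lvec_vaddL: "is_lvec v \<Longrightarrow> is_lvec w \<Longrightarrow> is_lvec (vaddL v w)"
  by (simp add: is_lvec_def vaddL_def lpoly_ladd)

lemma PhiV_vaddL: "is_lvec v \<Longrightarrow> is_lvec w \<Longrightarrow> PhiV (vaddL v w) = addF (PhiV v) (PhiV w)"
  by (cases v; cases w) (simp add: is_lvec_def vaddL_def phi_ladd addF_def)

lemma suppv_vaddL_disj:
  "suppv v \<inter> suppv w = {} \<Longrightarrow> suppv (vaddL v w) = suppv v \<union> suppv w"
  by (auto simp: suppv_def vaddL_def ladd_def)

lemma periodic_from_F:
  assumes lm: "is_lmat A" and P: "0 < P" and it: "\<forall>x. (mvF (PhiM A) ^^ P) x = x"
  shows "periodic A"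
proof -
  obtain b1 b2 b3 b4 where B: "mat_pow A P = (b1, b2, b3, b4)" by (cases "mat_pow A P") auto
  have lB: "is_lmat (b1, b2, b3, b4)" using lmat_pow[OF lm, of P] B by simp
  have e1: "is_lvec (lone, lzero)" and e2: "is_lvec (lzero, lone)" by (simp_all add: is_lvec_def)
  have "PhiV (mat_vec (mat_pow A P) (lone, lzero)) = (1, 0)"
    using PhiV_orbit[OF lm e1, of P] it by simp
  moreover have "PhiV (mat_vec (mat_pow A P) (lone, lzero)) = (phi b1, phi b3)"
    using PhiV_mat_vec[OF lB e1] B by simp
  moreover have "PhiV (mat_vec (mat_pow A P) (lzero, lone)) = (0, 1)"
    using PhiV_orbit[OF lm e2, of P] it by simp
  moreover have "PhiV (mat_vec (mat_pow A P) (lzero, lone)) = (phi b2, phi b4)"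
    using PhiV_mat_vec[OF lB e2] B by simp
  ultimately have "phi b1 = phi lone" "phi b3 = phi lzero" "phi b2 = phi lzero" "phi b4 = phi lone"
    by auto
  hence "b1 = lone" "b3 = lzero" "b2 = lzero" "b4 = lone"
    using lB by (auto intro: phi_inj)
  hence "mat_pow A P = mat_id" using B by (simp add: mat_id_def)
  thus ?thesis using P unfolding periodic_def by (intro exI[of _ P]) simp
qed

lemma gap_lemma:
  fixes X :: "int set" and G :: int
  assumes fin: "finite X" and ne: "X \<noteq> {}" and card: "card X \<le> n" and G: "0 \<le> G"
   and nogap: "\<forall>g. (\<exists>x\<in>X. x \<le> g) \<longrightarrow> (\<exists>x\<in>X. g + G < x) \<longrightarrow> (\<exists>x\<in>X. g < x \<and> x \<le> g + G)"
  shows "Max X - Min X \<le> int n * G"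
proof (rule ccontr)
  assume "\<not> ?thesis"
  hence big: "Min X + int n * G < Max X" by simp
  have minX: "Min X \<in> X" and maxX: "Max X \<in> X" using fin ne by auto
  have "\<forall>i\<in>{..<n}. \<exists>x. x \<in> X \<and> Min X + int i * G < x \<and> x \<le> Min X + int i * G + G"
  proof
    fix i assume "i \<in> {..<n}"
    hence "int (Suc i) * G \<le> int n * G" using G by (intro mult_right_mono) auto
    hence le: "int i * G + G \<le> int n * G" by (simp add: algebra_simps)
    have "0 \<le> int i * G" using G by simp
    hence "\<exists>x\<in>X. x \<le> Min X + int i * G" using minX by (intro bexI[of _ "Min X"]) auto
    moreover have "\<exists>x\<in>X. Min X + int i * G + G < x" using maxX big le by (intro bexI[of _ "Max X"]) auto
    ultimately show "\<exists>x. x \<in> X \<and> Min X + int i * G < x \<and> x \<le> Min X + int i * G + G"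
      using nogap by blast
  qed
  then obtain f where f: "\<forall>i\<in>{..<n}. f i \<in> X \<and> Min X + int i * G < f i \<and> f i \<le> Min X + int i * G + G"
    by metis
  have inj: "inj_on f {..<n}"
  proof (rule inj_onI)
    fix i j assume ij: "i \<in> {..<n}" "j \<in> {..<n}" "f i = f j"
    show "i = j"
    proof (rule ccontr)
      assume "i \<noteq> j"
      hence "i < j \<or> j < i" by auto
      thus False
      proof
        assume "i < j"
        hence "int (Suc i) * G \<le> int j * G" using G by (intro mult_right_mono) auto
        moreover have "f i \<le> Min X + int i * G + G" "Min X + int j * G < f j" using f ij(1,2) by auto
        ultimately show False using ij by (simp add: algebra_simps)
      next
        assume "j < i"
        hence "int (Suc j) * G \<le> int i * G" using G by (intro mult_right_mono) auto
        moreover have "f j \<le> Min X + int j * G + G" "Min X + int i * G < f i" using f ij(1,2) by auto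
        ultimately show False using ij by (simp add: algebra_simps)
      qed
    qed
  qed
  have sub: "f ` {..<n} \<subseteq> X - {Min X}"
  proof
    fix y assume "y \<in> f ` {..<n}"
    then obtain i where i: "i < n" "y = f i" by auto
    have "0 \<le> int i * G" using G by simp
    moreover have "f i \<in> X" "Min X + int i * G < f i" using f i(1) by auto
    ultimately show "y \<in> X - {Min X}" using i(2) by auto
  qed
  have "n \<le> card (X - {Min X})"
    using card_inj_on_le[OF inj sub] fin by simp
  also have "\<dots> = card X - 1" using minX fin by simp
  finally show False using card ne fin by (cases "card X") auto
qed

lemma lmul_spread: "lmul p q n \<Longrightarrow> (\<forall>i. p i \<longrightarrow> \<bar>i\<bar> \<le> R) \<Longrightarrow> \<exists>i. \<bar>i\<bar> \<le> R \<and> q (n - i)"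
  using lmul_ex by blast

lemma finite_S: "finite {v::vec2. \<forall>n. (fst v n \<or> snd v n) \<longrightarrow> 0 \<le> n \<and> n \<le> L}"
proof -
  have "{v::vec2. \<forall>n. (fst v n \<or> snd v n) \<longrightarrow> 0 \<le> n \<and> n \<le> L} \<subseteq>
     (\<lambda>(X, Y). ((\<lambda>n. n \<in> X), (\<lambda>n. n \<in> Y))) ` (Pow {0..L} \<times> Pow {0..L})"
  proof
    fix v :: vec2 assume v: "v \<in> {v::vec2. \<forall>n. (fst v n \<or> snd v n) \<longrightarrow> 0 \<le> n \<and> n \<le> L}"
    show "v \<in> (\<lambda>(X, Y). ((\<lambda>n. n \<in> X), (\<lambda>n. n \<in> Y))) ` (Pow {0..L} \<times> Pow {0..L})"
    proof (rule image_eqI[of _ _ "({n. fst v n}, {n. snd v n})"])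
      show "v = (case ({n. fst v n}, {n. snd v n}) of (X, Y) \<Rightarrow> (\<lambda>n. n \<in> X, \<lambda>n. n \<in> Y))"
        by (cases v) simp
      show "({n. fst v n}, {n. snd v n}) \<in> Pow {0..L} \<times> Pow {0..L}" using v by auto
    qed
  qed
  thus ?thesis by (rule finite_subset) simp
qed

context
  fixes A :: mat2
  assumes frac: "fractal A"
begin

abbreviation orb :: "vec2 \<Rightarrow> nat \<Rightarrow> vec2" where "orb v m \<equiv> mat_vec (mat_pow A m) v"

lemma lmA: "is_lmat A"
  using frac by (cases A) (simp add: fractal_def)

lemma hdA: "fst (PhiM A) * snd (snd (snd (PhiM A))) + fst (snd (PhiM A)) * fst (snd (snd (PhiM A))) = 1"
proof -
  obtain a b c d where A: "A = (a, b, c, d)" by (cases A) auto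
  have "mat_det A = lone" using frac A by (simp add: fractal_def)
  hence "phi (ladd (lmul a d) (lmul b c)) = 1" using A by simp
  thus ?thesis using lmA A by (simp add: phi_ladd phi_lmul lpoly_lmul)
qed

lemma PhiM_A: "PhiM A = (fst (PhiM A), fst (snd (PhiM A)), fst (snd (snd (PhiM A))), snd (snd (snd (PhiM A))))"
  by simp

lemma O_lvec: "is_lvec v \<Longrightarrow> is_lvec (orb v m)"
  by (rule lvec_orbit[OF lmA])

lemma O_Phi: "is_lvec v \<Longrightarrow> PhiV (orb v m) = (mvF (PhiM A) ^^ m) (PhiV v)"
  by (rule PhiV_orbit[OF lmA])

lemma O_add: "is_lvec v \<Longrightarrow> orb v (i + j) = orb (orb v j) i"
  by (rule PhiV_inj) (simp_all add: O_lvec O_Phi funpow_add)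

lemma O_0: assumes lv: "is_lvec v" shows "orb v 0 = v"
proof (rule PhiV_inj)
  show "is_lvec (orb v 0)" by (rule O_lvec[OF lv])
  show "PhiV (orb v 0) = PhiV v" using O_Phi[OF lv, of 0] by simp
qed (rule lv)

lemma O_Suc: assumes lv: "is_lvec v" shows "orb v (Suc i) = mat_vec A (orb v i)"
proof (rule PhiV_inj)
  show "is_lvec (orb v (Suc i))" by (rule O_lvec[OF lv])
  show "is_lvec (mat_vec A (orb v i))" by (rule lvec_mat_vec[OF lmA O_lvec[OF lv]])
  show "PhiV (orb v (Suc i)) = PhiV (mat_vec A (orb v i))"
    unfolding PhiV_mat_vec[OF lmA O_lvec[OF lv]] O_Phi[OF lv] by simp
qed

lemma O_vaddL: "is_lvec v \<Longrightarrow> is_lvec w \<Longrightarrow> orb (vaddL v w) i = vaddL (orb v i) (orb w i)"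
  by (rule PhiV_inj) (simp_all add: O_lvec O_Phi lvec_vaddL PhiV_vaddL it_add)

lemma O_nonzero: assumes "is_lvec v" "v \<noteq> vzero" shows "orb v i \<noteq> vzero"
proof
  assume "orb v i = vzero"
  hence "(mvF (PhiM A) ^^ i) (PhiV v) = (0,0)"
    using O_Phi[OF assms(1)] PhiV_zero_iff[OF O_lvec[OF assms(1)]] by metis
  hence "PhiV v = (0,0)" using inj_it[OF hdA] PhiM_A by metis
  thus False using assms PhiV_zero_iff by blast
qed

lemma noreturn:
  assumes lv: "is_lvec w" and nz: "w \<noteq> vzero" and P: "0 < P" and ret: "orb w P = vshift s w"
  shows False
proof -
  obtain \<alpha> \<beta> \<gamma> \<delta> where AF: "PhiM A = (\<alpha>, \<beta>, \<gamma>, \<delta>)" by (cases "PhiM A") auto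
  have hd: "\<alpha>*\<delta> + \<beta>*\<gamma> = 1" using hdA AF by simp
  have wnz: "PhiV w \<noteq> (0,0)" using PhiV_zero_iff[OF lv] nz by simp
  have r: "(mvF (\<alpha>,\<beta>,\<gamma>,\<delta>) ^^ P) (PhiV w) = smulF (fls_X_intpow s) (PhiV w)"
    using O_Phi[OF lv, of P] ret PhiV_vshift[OF lv, of s] AF by simp
  from noreturn_F[OF hd wnz P r] show False
  proof (elim disjE)
    assume "\<forall>x. (mvF (\<alpha>,\<beta>,\<gamma>,\<delta>) ^^ P) x = x"
    hence "periodic A" using periodic_from_F[OF lmA P] AF by simp
    thus False using frac by (simp add: fractal_def)
  next
    assume "\<forall>x. mvF (\<alpha>,\<beta>,\<gamma>,\<delta>) (mvF (\<alpha>,\<beta>,\<gamma>,\<delta>) x) = x"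
    hence "\<forall>x. (mvF (PhiM A) ^^ 2) x = x" using AF by (simp add: numeral_2_eq_2)
    hence "periodic A" using periodic_from_F[OF lmA, of 2] by simp
    thus False using frac by (simp add: fractal_def)
  next
    assume "\<exists>k. k \<noteq> 0 \<and> mvF (\<alpha>,\<beta>,\<gamma>,\<delta>) (PhiV w) = smulF (fls_X_intpow k) (PhiV w)"
    then obtain k where k: "k \<noteq> 0" "mvF (PhiM A) (PhiV w) = smulF (fls_X_intpow k) (PhiV w)"
      using AF by auto
    obtain w1 w2 where w: "w = (w1, w2)" by (cases w)
    have lw: "is_lpoly w1" "is_lpoly w2" using lv w by (auto simp: is_lvec_def)
    have eqP: "PhiV (mat_vec A w) = PhiV (lmul (lmon k) w1, lmul (lmon k) w2)"
      using k(2) PhiV_mat_vec[OF lmA lv] lw w by (simp add: smulF_def phi_lmul phi_lmon)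
    have "mat_vec A w = (lmul (lmon k) w1, lmul (lmon k) w2)"
      by (rule PhiV_inj[OF lvec_mat_vec[OF lmA lv] _ eqP]) (simp add: is_lvec_def lpoly_lmul lw)
    hence "has_glider A" unfolding has_glider_def using lv nz k(1) w by auto
    thus False using frac by (simp add: fractal_def)
  qed
qed


lemma spread: "\<exists>R::int. 0 \<le> R \<and> (\<forall>v n. n \<in> suppv (mat_vec A v) \<longrightarrow> (\<exists>i. \<bar>i\<bar> \<le> R \<and> n - i \<in> suppv v))"
proof -
  obtain a b c d where A: "A = (a, b, c, d)" by (cases A) auto
  define U where "U = {n. a n \<or> b n \<or> c n \<or> d n}"
  have "finite U"
  proof -
    have "U = {n. a n} \<union> {n. b n} \<union> {n. c n} \<union> {n. d n}" by (auto simp: U_def)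
    thus "finite U" using lmA A by (simp add: is_lpoly_def)
  qed
  define R where "R = Max (insert 0 (abs ` U))"
  have R0: "0 \<le> R" using \<open>finite U\<close> by (simp add: R_def)
  have RU: "\<And>n. n \<in> U \<Longrightarrow> \<bar>n\<bar> \<le> R" using \<open>finite U\<close> by (simp add: R_def)
  have ba: "\<forall>i. a i \<longrightarrow> \<bar>i\<bar> \<le> R" "\<forall>i. b i \<longrightarrow> \<bar>i\<bar> \<le> R"
       "\<forall>i. c i \<longrightarrow> \<bar>i\<bar> \<le> R" "\<forall>i. d i \<longrightarrow> \<bar>i\<bar> \<le> R" using RU by (auto simp: U_def)
  have "\<forall>v n. n \<in> suppv (mat_vec A v) \<longrightarrow> (\<exists>i. \<bar>i\<bar> \<le> R \<and> n - i \<in> suppv v)"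
  proof (intro allI impI)
    fix v n assume n: "n \<in> suppv (mat_vec A v)"
    obtain x y where v: "v = (x, y)" by (cases v)
    have "lmul a x n \<or> lmul b y n \<or> lmul c x n \<or> lmul d y n"
      using n by (auto simp: suppv_def A v ladd_def)
    hence "\<exists>i. \<bar>i\<bar> \<le> R \<and> (x (n - i) \<or> y (n - i))"
    proof (elim disjE)
      assume "lmul a x n" thus ?thesis using lmul_spread[OF _ ba(1)] by blast
    next
      assume "lmul b y n" thus ?thesis using lmul_spread[OF _ ba(2)] by blast
    next
      assume "lmul c x n" thus ?thesis using lmul_spread[OF _ ba(3)] by blast
    next
      assume "lmul d y n" thus ?thesis using lmul_spread[OF _ ba(4)] by blast
    qed
    thus "\<exists>i. \<bar>i\<bar> \<le> R \<and> n - i \<in> suppv v" by (simp add: suppv_def v)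
  qed
  thus ?thesis using R0 by blast
qed

lemma orb_upper:
  assumes R: "\<forall>v n. n \<in> suppv (mat_vec A v) \<longrightarrow> (\<exists>i. \<bar>i\<bar> \<le> R \<and> n - i \<in> suppv v)"
    and lv: "is_lvec v" and b: "\<forall>n\<in>suppv v. n \<le> B"
  shows "\<forall>n\<in>suppv (orb v k). n \<le> B + int k * R"
proof (induct k)
  case 0 show ?case by (subst O_0[OF lv]) (simp add: b)
next
  case (Suc k)
  show ?case
  proof
    fix n assume "n \<in> suppv (orb v (Suc k))"
    hence "n \<in> suppv (mat_vec A (orb v k))" using O_Suc[OF lv] by simp
    then obtain i where "\<bar>i\<bar> \<le> R" "n - i \<in> suppv (orb v k)" using R by blast
    thus "n \<le> B + int (Suc k) * R" using Suc by (force simp: algebra_simps)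
  qed
qed

lemma orb_lower:
  assumes R: "\<forall>v n. n \<in> suppv (mat_vec A v) \<longrightarrow> (\<exists>i. \<bar>i\<bar> \<le> R \<and> n - i \<in> suppv v)"
    and lv: "is_lvec v" and b: "\<forall>n\<in>suppv v. B \<le> n"
  shows "\<forall>n\<in>suppv (orb v k). B - int k * R \<le> n"
proof (induct k)
  case 0 show ?case by (subst O_0[OF lv]) (simp add: b)
next
  case (Suc k)
  show ?case
  proof
    fix n assume "n \<in> suppv (orb v (Suc k))"
    hence "n \<in> suppv (mat_vec A (orb v k))" using O_Suc[OF lv] by simp
    then obtain i where "\<bar>i\<bar> \<le> R" "n - i \<in> suppv (orb v k)" using R by blast
    thus "B - int (Suc k) * R \<le> n" using Suc by (force simp: algebra_simps)
  qed
qed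


lemma weight_grows:
  "\<exists>M. \<forall>v. is_lvec v \<and> v \<noteq> vzero \<longrightarrow> (\<exists>j\<le>M. K < pauli_weight (orb v j))"
proof (induct K)
  case 0
  show ?case
  proof (rule exI[of _ 0], intro allI impI)
    fix v assume v: "is_lvec v \<and> v \<noteq> vzero"
    have "suppv v \<noteq> {}" using v suppv_empty_iff by blast
    hence "0 < pauli_weight v" using finite_suppv v by (simp add: weight_suppv card_gt_0_iff)
    thus "\<exists>j\<le>0. 0 < pauli_weight (orb v j)" using O_0 v by simp
  qed
next
  case (Suc K)
  obtain M where IH: "\<forall>v. is_lvec v \<and> v \<noteq> vzero \<longrightarrow> (\<exists>j\<le>M. K < pauli_weight (orb v j))"
    using Suc by blast
  obtain R where R0: "0 \<le> R" and R: "\<forall>v n. n \<in> suppv (mat_vec A v) \<longrightarrow> (\<exists>i. \<bar>i\<bar> \<le> R \<and> n - i \<in> suppv v)"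
    using spread by blast
  define G where "G = 2 * R * int M + 1"
  have G0: "0 \<le> G" using R0 by (simp add: G_def)
  define L where "L = int (Suc K) * G"
  define S where "S = {v::vec2. \<forall>n. (fst v n \<or> snd v n) \<longrightarrow> 0 \<le> n \<and> n \<le> L}"
  have finS: "finite S" unfolding S_def by (rule finite_S)
  define N where "N = card S"
  show ?case
  proof (rule exI[of _ "N + M"], intro allI impI)
    fix v assume v: "is_lvec v \<and> v \<noteq> vzero"
    hence lv: "is_lvec v" and nz: "v \<noteq> vzero" by auto
    show "\<exists>j \<le> N + M. Suc K < pauli_weight (orb v j)"
    proof (rule ccontr)
      assume "\<not> ?thesis"
      hence small: "\<And>j. j \<le> N + M \<Longrightarrow> pauli_weight (orb v j) \<le> Suc K" by auto
      have nogap: "\<forall>g. (\<exists>x\<in>suppv (orb v j). x \<le> g) \<longrightarrow> (\<exists>x\<in>suppv (orb v j). g + G < x)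
          \<longrightarrow> (\<exists>x\<in>suppv (orb v j). g < x \<and> x \<le> g + G)" if j: "j \<le> N" for j
      proof (intro allI impI, rule ccontr)
        fix g assume lo: "\<exists>x\<in>suppv (orb v j). x \<le> g" and hi: "\<exists>x\<in>suppv (orb v j). g + G < x"
          and ng: "\<not> (\<exists>x\<in>suppv (orb v j). g < x \<and> x \<le> g + G)"
        define \<eta> where "\<eta> = orb v j"
        define \<eta>1 where "\<eta>1 = ((\<lambda>n. fst \<eta> n \<and> n \<le> g), (\<lambda>n. snd \<eta> n \<and> n \<le> g))"
        define \<eta>2 where "\<eta>2 = ((\<lambda>n. fst \<eta> n \<and> g < n), (\<lambda>n. snd \<eta> n \<and> g < n))"
        have l\<eta>: "is_lvec \<eta>" unfolding \<eta>_def by (rule O_lvec[OF lv])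
        have l1: "is_lvec \<eta>1" using l\<eta> unfolding \<eta>1_def is_lvec_def is_lpoly_def
          by (auto elim: finite_subset[rotated])
        have l2: "is_lvec \<eta>2" using l\<eta> unfolding \<eta>2_def is_lvec_def is_lpoly_def
          by (auto elim: finite_subset[rotated])
        have sp1: "suppv \<eta>1 = {n \<in> suppv \<eta>. n \<le> g}" by (auto simp: suppv_def \<eta>1_def)
        have sp2: "suppv \<eta>2 = {n \<in> suppv \<eta>. g < n}" by (auto simp: suppv_def \<eta>2_def)
        have nz1: "\<eta>1 \<noteq> vzero" using lo sp1 suppv_empty_iff[of \<eta>1] by (auto simp: \<eta>_def)
        have nz2: "\<eta>2 \<noteq> vzero"
        proof -
          obtain x where "x \<in> suppv \<eta>" "g + G < x" using hi by (auto simp: \<eta>_def)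
          moreover have "g < g + G + 1" using G0 by simp
          ultimately have "x \<in> suppv \<eta>2" using sp2 by auto
          thus ?thesis using suppv_empty_iff[of \<eta>2] by auto
        qed
        have split: "\<eta> = vaddL \<eta>1 \<eta>2"
          by (cases \<eta>) (auto simp: vaddL_def \<eta>1_def \<eta>2_def ladd_def fun_eq_iff)
        obtain i where i: "i \<le> M" "K < pauli_weight (orb \<eta>1 i)" using IH l1 nz1 by blast
        have b1: "\<forall>n\<in>suppv \<eta>1. n \<le> g" using sp1 by auto
        have b2: "\<forall>n\<in>suppv \<eta>2. g + G + 1 \<le> n"
        proof
          fix n assume "n \<in> suppv \<eta>2"
          hence "n \<in> suppv \<eta>" "g < n" using sp2 by auto
          thus "g + G + 1 \<le> n" using ng by (force simp: \<eta>_def)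
        qed
        have s1: "\<forall>n\<in>suppv (orb \<eta>1 i). n \<le> g + int i * R" by (rule orb_upper[OF R l1 b1])
        have s2: "\<forall>n\<in>suppv (orb \<eta>2 i). g + G + 1 - int i * R \<le> n" by (rule orb_lower[OF R l2 b2])
        have "int i * R \<le> int M * R" using i(1) R0 by (intro mult_right_mono) auto
        hence lt: "g + int i * R < g + G + 1 - int i * R" by (simp add: G_def algebra_simps)
        have disj: "suppv (orb \<eta>1 i) \<inter> suppv (orb \<eta>2 i) = {}"
        proof (rule ccontr)
          assume "suppv (orb \<eta>1 i) \<inter> suppv (orb \<eta>2 i) \<noteq> {}"
          then obtain n where n1: "n \<in> suppv (orb \<eta>1 i)" and n2: "n \<in> suppv (orb \<eta>2 i)" by blast
          have "n \<le> g + int i * R" using s1 n1 by blast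
          moreover have "g + G + 1 - int i * R \<le> n" using s2 n2 by blast
          ultimately show False using lt by linarith
        qed
        have "orb \<eta> i = vaddL (orb \<eta>1 i) (orb \<eta>2 i)" using split O_vaddL[OF l1 l2] by simp
        hence spU: "suppv (orb \<eta> i) = suppv (orb \<eta>1 i) \<union> suppv (orb \<eta>2 i)"
          using suppv_vaddL_disj[OF disj] by simp
        have f1: "finite (suppv (orb \<eta>1 i))" and f2: "finite (suppv (orb \<eta>2 i))"
          using finite_suppv O_lvec l1 l2 by auto
        have "suppv (orb \<eta>2 i) \<noteq> {}" using O_nonzero[OF l2 nz2] suppv_empty_iff by blast
        hence c2: "1 \<le> card (suppv (orb \<eta>2 i))" using f2 by (simp add: Suc_le_eq card_gt_0_iff)
        have "pauli_weight (orb \<eta> i) = card (suppv (orb \<eta>1 i)) + card (suppv (orb \<eta>2 i))"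
          using spU card_Un_disjoint[OF f1 f2 disj] by (simp add: weight_suppv)
        hence "Suc (Suc K) \<le> pauli_weight (orb \<eta> i)" using i(2) c2 by (simp add: weight_suppv)
        moreover have "orb \<eta> i = orb v (i + j)" unfolding \<eta>_def by (rule O_add[OF lv, symmetric])
        moreover have "i + j \<le> N + M" using i(1) j by simp
        ultimately show False using small by fastforce
      qed
      have span: "Max (suppv (orb v j)) - Min (suppv (orb v j)) \<le> L" if j: "j \<le> N" for j
      proof -
        have fin: "finite (suppv (orb v j))" using finite_suppv O_lvec lv by auto
        have ne: "suppv (orb v j) \<noteq> {}" using O_nonzero[OF lv nz] suppv_empty_iff by blast
        have "card (suppv (orb v j)) \<le> Suc K" using small[of j] j by (simp add: weight_suppv)
        thus ?thesis unfolding L_def using gap_lemma[OF fin ne _ G0 nogap[OF j]] by blast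
      qed
      define m where "m j = Min (suppv (orb v j))" for j
      define f where "f j = vshift (- m j) (orb v j)" for j
      have fS: "f ` {..N} \<subseteq> S"
      proof
        fix z assume "z \<in> f ` {..N}"
        then obtain j where j: "j \<le> N" "z = f j" by auto
        have fin: "finite (suppv (orb v j))" using finite_suppv O_lvec lv by auto
        show "z \<in> S" unfolding S_def
        proof (intro CollectI allI impI)
          fix n assume "fst z n \<or> snd z n"
          hence "n + m j \<in> suppv (orb v j)" using j by (auto simp: f_def vshift_def suppv_def)
          moreover from this have "Min (suppv (orb v j)) \<le> n + m j" "n + m j \<le> Max (suppv (orb v j))"
            using fin by auto
          ultimately show "0 \<le> n \<and> n \<le> L" using span[OF j(1)] by (simp add: m_def)
        qed
      qed
      have "\<not> inj_on f {..N}"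
      proof
        assume "inj_on f {..N}"
        hence "card {..N} \<le> card S" using card_inj_on_le[OF _ fS finS] by blast
        thus False by (simp add: N_def)
      qed
      then obtain i j where ij: "i \<le> N" "j \<le> N" "i \<noteq> j" "f i = f j"
        unfolding inj_on_def by auto
      obtain i' j' where ij': "i' < j'" "f i' = f j'"
        using ij by (metis linorder_neqE_nat)
      have "orb v j' = vshift (m j') (f j')" by (simp add: f_def vshift_vshift vshift_0)
      also have "\<dots> = vshift (m j') (f i')" using ij'(2) by simp
      also have "\<dots> = vshift (m j' - m i') (orb v i')" by (simp add: f_def vshift_vshift)
      finally have ret: "orb v j' = vshift (m j' - m i') (orb v i')" .
      have "orb v j' = orb (orb v i') (j' - i')"
        using O_add[OF lv, of "j' - i'" i'] ij'(1) by simp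
      hence "orb (orb v i') (j' - i') = vshift (m j' - m i') (orb v i')" using ret by simp
      thus False using noreturn[OF O_lvec[OF lv] O_nonzero[OF lv nz], of "j' - i'"] ij'(1) by simp
    qed
  qed
qed

end

theorem lemmaA2:
  fixes A :: mat2 and \<xi> :: vec2
  assumes "fractal A" and "is_lvec \<xi>" and "\<xi> \<noteq> vzero"
  shows "\<forall>k::nat. \<exists>m::nat. pauli_weight (mat_vec (mat_pow A m) \<xi>) \<ge> k"
proof
  fix k :: nat
  obtain M where "\<forall>v. is_lvec v \<and> v \<noteq> vzero \<longrightarrow> (\<exists>j\<le>M. k < pauli_weight (mat_vec (mat_pow A j) v))"
    using weight_grows[OF assms(1), of k] by blast
  then obtain j where "k < pauli_weight (mat_vec (mat_pow A j) \<xi>)" using assms by blast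
  thus "\<exists>m::nat. pauli_weight (mat_vec (mat_pow A m) \<xi>) \<ge> k" by (intro exI[of _ j]) simp
qed

end
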